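(* The following implementation of the extended weak descriptor abstract data type is lock-free: in every execution in which processes take infinitely many steps, infinitely many of the descriptor operations CreateNew, ReadField, ReadImmutables, WriteField, CASField terminate. Implementation: for each descriptor type $T$ and process $p$ there is one shared object $D_{T,p}$ holding the immutable fields of type $T$ and a single word $mutables$ containing a sequence number $seq$ (initially $0$) and all mutable fields, read and CASed atomically as one word. A descriptor pointer is a pair $\langle q,s\rangle$. - $\mathrm{CreateNew}(T,v_1,\ldots)$ by $p$: $oldseq:=D_{T,p}.mutables.seq$; set the sequence number to $oldseq+1$; write every field with its value; set the sequence number to $oldseq+2$; return $\langle p, oldseq+2\rangle$. - $\mathrm{ReadField}(\langle q,s\rangle,f,dv)$: read field $f$ of $D_{T,q}$, then read $D_{T,q}.mutables.seq$; return $dv$ if it differs from $s$, else the value read. - $\mathrm{ReadImmutables}(\langle q,s\rangle)$: read all immutable fields of $D_{T,q}$, then the sequence number; return $\bot$ if it differs from $s$, else the values read. - $\mathrm{WriteField}(\langle q,s\rangle,f,v)$: repeat: $exp:=D_{T,q}.mutables$; if $exp.seq\ne s$ return; $new:=exp$ with $f$ set to $v$; if $\mathrm{CAS}(D_{T,q}.mutables,exp,new)$ succeeds return. - $\mathrm{CASField}(\langle q,s\rangle,f,fexp,fnew)$: repeat: $exp:=D_{T,q}.mutables$; if $exp.seq\ne s$ return $\bot$; if $exp.f\ne fexp$ return $exp.f$; $new:=exp$ with $f$ set to $fnew$; if $\mathrm{CAS}(D_{T,q}.mutables,exp,new)$ succeeds return.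
   Context: Asynchronous shared-memory system of processes; shared memory consists of base objects supporting read, write and compare-and-swap (CAS), each step being atomic. An execution is an alternating sequence of configurations and steps. A CAS$(x, exp, new)$ atomically changes $x$ to $new$ and succeeds if $x=exp$, and otherwise fails without changing $x$. Sequence numbers are unbounded. *)

theory Defs
  imports Main
begin

text \<open>
  Type parameters: 't descriptor types, 'p processes, 'i immutable field names,
  'm mutable field names, 'v field values.
  Shared memory:
   imem T p i  -- base object holding immutable field i of D_{T,p}
   mmem T p    -- the single word D_{T,p}.mutables = (seq, mutable fields)
  The fields of type T are given by imf T (immutable) and mf T (mutable).
\<close>

datatype ('p,'i,'v) result =
    RPtr 'p nat
  | RVal 'v
  | RImms "'i \<Rightarrow> 'v option"
  | RBot
  | RUnit

datatype ('t,'p,'i,'m,'v) pc =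
    Idle "('p,'i,'v) result option"
  | CN_ReadSeq 't "'i \<Rightarrow> 'v" "'m \<Rightarrow> 'v"
  \<comment> \<open>write the word with seq = oldseq+1 (local copy of mutables)\<close>
  | CN_SetSeq1 't "'i \<Rightarrow> 'v" "'m \<Rightarrow> 'v" nat "'m \<Rightarrow> 'v"
  | CN_WriteImm 't "'i \<Rightarrow> 'v" "'m \<Rightarrow> 'v" nat "'m \<Rightarrow> 'v" "'i list"
  | CN_WriteMut 't "'i \<Rightarrow> 'v" "'m \<Rightarrow> 'v" nat "'m \<Rightarrow> 'v" "'m list"
  | RF_ReadField 't 'p nat "'i + 'm" 'v
  | RF_ReadSeq 't 'p nat 'v 'v
  | RI_ReadImm 't 'p nat "'i list" "'i \<Rightarrow> 'v option"
  | WF_Read 't 'p nat 'm 'v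
  | WF_CAS 't 'p nat 'm 'v "nat \<times> ('m \<Rightarrow> 'v)"
  | CF_Read 't 'p nat 'm 'v 'v
  | CF_CAS 't 'p nat 'm 'v 'v "nat \<times> ('m \<Rightarrow> 'v)"

record ('t,'p,'i,'m,'v) conf =
  pcs  :: "'p \<Rightarrow> ('t,'p,'i,'m,'v) pc"
  imem :: "'t \<Rightarrow> 'p \<Rightarrow> 'i \<Rightarrow> 'v"
  mmem :: "'t \<Rightarrow> 'p \<Rightarrow> nat \<times> ('m \<Rightarrow> 'v)"

definition initial :: "('t,'p,'i,'m,'v) conf \<Rightarrow> bool" where
  "initial c \<longleftrightarrow> (\<forall>p. pcs c p = Idle None) \<and> (\<forall>T p. fst (mmem c T p) = 0)"

definition setpc :: "'p \<Rightarrow> ('t,'p,'i,'m,'v) pc \<Rightarrow> ('t,'p,'i,'m,'v) conf \<Rightarrow> ('t,'p,'i,'m,'v) conf" where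
  "setpc p x c = c\<lparr>pcs := (pcs c)(p := x)\<rparr>"

definition setm :: "'t \<Rightarrow> 'p \<Rightarrow> nat \<times> ('m \<Rightarrow> 'v) \<Rightarrow> ('t,'p,'i,'m,'v) conf \<Rightarrow> ('t,'p,'i,'m,'v) conf" where
  "setm T q w c = c\<lparr>mmem := (mmem c)(T := (mmem c T)(q := w))\<rparr>"

definition seti :: "'t \<Rightarrow> 'p \<Rightarrow> 'i \<Rightarrow> 'v \<Rightarrow> ('t,'p,'i,'m,'v) conf \<Rightarrow> ('t,'p,'i,'m,'v) conf" where
  "seti T q i v c = c\<lparr>imem := (imem c)(T := (imem c T)(q := (imem c T q)(i := v)))\<rparr>"

text \<open>One atomic step of process p (at most one shared-memory access per step).\<close>
inductive step :: "('t \<Rightarrow> 'i list) \<Rightarrow> ('t \<Rightarrow> 'm list) \<Rightarrow> 'p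
                   \<Rightarrow> ('t,'p,'i,'m,'v) conf \<Rightarrow> ('t,'p,'i,'m,'v) conf \<Rightarrow> bool"
  for imf :: "'t \<Rightarrow> 'i list" and mf :: "'t \<Rightarrow> 'm list" where
  inv_CN: "pcs c p = Idle r \<Longrightarrow> step imf mf p c (setpc p (CN_ReadSeq T iv mv) c)"
| inv_RF: "pcs c p = Idle r \<Longrightarrow> f \<in> Inl ` set (imf T) \<union> Inr ` set (mf T) \<Longrightarrow>
           step imf mf p c (setpc p (RF_ReadField T q s f dv) c)"
| inv_RI: "pcs c p = Idle r \<Longrightarrow> step imf mf p c (setpc p (RI_ReadImm T q s (imf T) Map.empty) c)"
| inv_WF: "pcs c p = Idle r \<Longrightarrow> f \<in> set (mf T) \<Longrightarrow> step imf mf p c (setpc p (WF_Read T q s f v) c)"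
| inv_CF: "pcs c p = Idle r \<Longrightarrow> f \<in> set (mf T) \<Longrightarrow>
           step imf mf p c (setpc p (CF_Read T q s f fe fn) c)"
| cn_read: "pcs c p = CN_ReadSeq T iv mv \<Longrightarrow>
           step imf mf p c (setpc p (CN_SetSeq1 T iv mv (fst (mmem c T p)) (snd (mmem c T p))) c)"
| cn_seq1: "pcs c p = CN_SetSeq1 T iv mv os loc \<Longrightarrow>
           step imf mf p c (setpc p (CN_WriteImm T iv mv os loc (imf T)) (setm T p (os + 1, loc) c))"
| cn_imm:  "pcs c p = CN_WriteImm T iv mv os loc (i # is) \<Longrightarrow>
           step imf mf p c (setpc p (CN_WriteImm T iv mv os loc is) (seti T p i (iv i) c))"
| cn_immdone: "pcs c p = CN_WriteImm T iv mv os loc [] \<Longrightarrow>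
           step imf mf p c (setpc p (CN_WriteMut T iv mv os loc (mf T)) c)"
| cn_mut:  "pcs c p = CN_WriteMut T iv mv os loc (f # fs) \<Longrightarrow>
           step imf mf p c (setpc p (CN_WriteMut T iv mv os (loc(f := mv f)) fs)
                                     (setm T p (os + 1, loc(f := mv f)) c))"
| cn_seq2: "pcs c p = CN_WriteMut T iv mv os loc [] \<Longrightarrow>
           step imf mf p c (setpc p (Idle (Some (RPtr p (os + 2)))) (setm T p (os + 2, loc) c))"
| rf_imm:  "pcs c p = RF_ReadField T q s (Inl i) dv \<Longrightarrow>
           step imf mf p c (setpc p (RF_ReadSeq T q s dv (imem c T q i)) c)"
| rf_mut:  "pcs c p = RF_ReadField T q s (Inr m) dv \<Longrightarrow>
           step imf mf p c (setpc p (RF_ReadSeq T q s dv (snd (mmem c T q) m)) c)"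
| rf_seq:  "pcs c p = RF_ReadSeq T q s dv v \<Longrightarrow>
           step imf mf p c (setpc p (Idle (Some (RVal (if fst (mmem c T q) \<noteq> s then dv else v)))) c)"
| ri_imm:  "pcs c p = RI_ReadImm T q s (i # is) acc \<Longrightarrow>
           step imf mf p c (setpc p (RI_ReadImm T q s is (acc(i \<mapsto> imem c T q i))) c)"
| ri_seq:  "pcs c p = RI_ReadImm T q s [] acc \<Longrightarrow>
           step imf mf p c (setpc p (Idle (Some (if fst (mmem c T q) \<noteq> s then RBot else RImms acc))) c)"
| wf_read_ret: "pcs c p = WF_Read T q s f v \<Longrightarrow> fst (mmem c T q) \<noteq> s \<Longrightarrow>
           step imf mf p c (setpc p (Idle (Some RUnit)) c)"
| wf_read: "pcs c p = WF_Read T q s f v \<Longrightarrow> fst (mmem c T q) = s \<Longrightarrow>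
           step imf mf p c (setpc p (WF_CAS T q s f v (mmem c T q)) c)"
| wf_cas_ok: "pcs c p = WF_CAS T q s f v e \<Longrightarrow> mmem c T q = e \<Longrightarrow>
           step imf mf p c (setpc p (Idle (Some RUnit)) (setm T q (fst e, (snd e)(f := v)) c))"
| wf_cas_fail: "pcs c p = WF_CAS T q s f v e \<Longrightarrow> mmem c T q \<noteq> e \<Longrightarrow>
           step imf mf p c (setpc p (WF_Read T q s f v) c)"
| cf_read_bot: "pcs c p = CF_Read T q s f fe fn \<Longrightarrow> fst (mmem c T q) \<noteq> s \<Longrightarrow>
           step imf mf p c (setpc p (Idle (Some RBot)) c)"
| cf_read_ne: "pcs c p = CF_Read T q s f fe fn \<Longrightarrow> fst (mmem c T q) = s \<Longrightarrow>
           snd (mmem c T q) f \<noteq> fe \<Longrightarrow>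
           step imf mf p c (setpc p (Idle (Some (RVal (snd (mmem c T q) f)))) c)"
| cf_read: "pcs c p = CF_Read T q s f fe fn \<Longrightarrow> fst (mmem c T q) = s \<Longrightarrow>
           snd (mmem c T q) f = fe \<Longrightarrow>
           step imf mf p c (setpc p (CF_CAS T q s f fe fn (mmem c T q)) c)"
| cf_cas_ok: "pcs c p = CF_CAS T q s f fe fn e \<Longrightarrow> mmem c T q = e \<Longrightarrow>
           step imf mf p c (setpc p (Idle (Some (RVal fe))) (setm T q (fst e, (snd e)(f := fn)) c))"
| cf_cas_fail: "pcs c p = CF_CAS T q s f fe fn e \<Longrightarrow> mmem c T q \<noteq> e \<Longrightarrow>
           step imf mf p c (setpc p (CF_Read T q s f fe fn) c)"

definition is_idle :: "('t,'p,'i,'m,'v) pc \<Rightarrow> bool" where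
  "is_idle x \<longleftrightarrow> (\<exists>r. x = Idle r)"

definition completes :: "'p \<Rightarrow> ('t,'p,'i,'m,'v) conf \<Rightarrow> ('t,'p,'i,'m,'v) conf \<Rightarrow> bool" where
  "completes p c c' \<longleftrightarrow> \<not> is_idle (pcs c p) \<and> is_idle (pcs c' p)"

end

theory Submission
  imports Defs "HOL-Library.Infinite_Set"
begin

fun Wm :: "('t \<Rightarrow> 'm list) \<Rightarrow> ('t,'p,'i,'m,'v) pc \<Rightarrow> nat" where
  "Wm mf (CN_ReadSeq T iv mv) = Suc (length (mf T))"
| "Wm mf (CN_SetSeq1 T iv mv os loc) = Suc (length (mf T))"
| "Wm mf (CN_WriteImm T iv mv os loc is) = length (mf T)"
| "Wm mf (CN_WriteMut T iv mv os loc fs) = length fs"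
| "Wm mf _ = 0"

fun Lm :: "('t \<Rightarrow> 'p \<Rightarrow> nat \<times> ('m \<Rightarrow> 'v)) \<Rightarrow> ('t,'p,'i,'m,'v) pc \<Rightarrow> nat" where
  "Lm M (CN_ReadSeq T iv mv) = 1"
| "Lm M (CN_WriteImm T iv mv os loc is) = Suc (length is)"
| "Lm M (RF_ReadField T q s f dv) = 2"
| "Lm M (RF_ReadSeq T q s dv v) = 1"
| "Lm M (RI_ReadImm T q s is acc) = Suc (length is)"
| "Lm M (WF_Read T q s f v) = 2"
| "Lm M (WF_CAS T q s f v e) = (if M T q = e then 1 else 3)"
| "Lm M (CF_Read T q s f fe fn) = 2"
| "Lm M (CF_CAS T q s f fe fn e) = (if M T q = e then 1 else 3)"
| "Lm M _ = 0"

definition mu :: "('t \<Rightarrow> 'm list) \<Rightarrow> ('t,'p::finite,'i,'m,'v) conf \<Rightarrow> nat \<times> nat \<times> nat" where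
  "mu mf c = (card {q. is_idle (pcs c q)}, \<Sum>q\<in>UNIV. Wm mf (pcs c q), \<Sum>q\<in>UNIV. Lm (mmem c) (pcs c q))"

abbreviation "RR \<equiv> less_than <*lex*> less_than <*lex*> less_than"

lemma sum_upd:
  fixes g :: "'a \<Rightarrow> nat" and h :: "'p::finite \<Rightarrow> 'a"
  shows "(\<Sum>q\<in>UNIV. g ((h(p := x)) q)) + g (h p) = (\<Sum>q\<in>UNIV. g (h q)) + g x"
proof -
  have a: "(\<Sum>q\<in>UNIV. g ((h(p := x)) q)) = g x + (\<Sum>q\<in>UNIV-{p}. g (h q))"
    by (simp add: sum.remove[of UNIV p])
  have b: "(\<Sum>q\<in>UNIV. g (h q)) = g (h p) + (\<Sum>q\<in>UNIV-{p}. g (h q))"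
    by (simp add: sum.remove[of UNIV p])
  show ?thesis using a b by simp
qed

lemma card_same:
  assumes "pcs c' = (pcs c)(p := x)" "is_idle x = is_idle (pcs c p)"
  shows "{q. is_idle (pcs c' q)} = {q. is_idle (pcs c q)}"
proof -
  have "\<And>q. is_idle (pcs c' q) = is_idle (pcs c q)"
    using assms by (simp add: fun_upd_apply)
  then show ?thesis by simp
qed

lemma local_dec:
  fixes c c' :: "('t,'p::finite,'i,'m,'v) conf"
  assumes "pcs c' = (pcs c)(p := x)" "mmem c' = mmem c" "\<not> is_idle (pcs c p)" "\<not> is_idle x"
    "Wm mf x = Wm mf (pcs c p)" "Lm (mmem c) x < Lm (mmem c) (pcs c p)"
  shows "(mu mf c', mu mf c) \<in> RR"
proof -
  have 1: "{q. is_idle (pcs c' q)} = {q. is_idle (pcs c q)}" using card_same[OF assms(1)] assms by simp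
  have 2: "(\<Sum>q\<in>UNIV. Wm mf (pcs c' q)) = (\<Sum>q\<in>UNIV. Wm mf (pcs c q))"
    using sum_upd[of "Wm mf" "pcs c" p x] assms by simp
  have 3: "(\<Sum>q\<in>UNIV. Lm (mmem c') (pcs c' q)) < (\<Sum>q\<in>UNIV. Lm (mmem c') (pcs c q))"
    using sum_upd[of "Lm (mmem c)" "pcs c" p x] assms by simp
  show ?thesis unfolding mu_def using 1 2 3 assms(2) by simp
qed

lemma write_dec:
  fixes c c' :: "('t,'p::finite,'i,'m,'v) conf"
  assumes "pcs c' = (pcs c)(p := x)" "\<not> is_idle (pcs c p)" "\<not> is_idle x"
    "Wm mf x < Wm mf (pcs c p)"
  shows "(mu mf c', mu mf c) \<in> RR"
proof -
  have 1: "{q. is_idle (pcs c' q)} = {q. is_idle (pcs c q)}" using card_same[OF assms(1)] assms by simp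
  have 2: "(\<Sum>q\<in>UNIV. Wm mf (pcs c' q)) < (\<Sum>q\<in>UNIV. Wm mf (pcs c q))"
    using sum_upd[of "Wm mf" "pcs c" p x] assms by simp
  show ?thesis unfolding mu_def using 1 2 by simp
qed

lemma inv_dec:
  fixes c c' :: "('t,'p::finite,'i,'m,'v) conf"
  assumes "pcs c' = (pcs c)(p := x)" "is_idle (pcs c p)" "\<not> is_idle x"
  shows "(mu mf c', mu mf c) \<in> RR"
proof -
  have "{q. is_idle (pcs c' q)} = {q. is_idle (pcs c q)} - {p}" using assms by auto
  moreover have "p \<in> {q. is_idle (pcs c q)}" using assms by simp
  ultimately have "card {q. is_idle (pcs c' q)} < card {q. is_idle (pcs c q)}"
    by (metis card_Diff1_less finite)
  then show ?thesis unfolding mu_def by simp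
qed

lemma step_dec:
  fixes c c' :: "('t,'p::finite,'i,'m,'v) conf"
  assumes "step imf mf p c c'" "\<not> completes p c c'"
  shows "(mu mf c', mu mf c) \<in> RR"
  using assms
proof cases
  case (inv_CN r T iv mv) then show ?thesis
    by (intro inv_dec[where x="CN_ReadSeq T iv mv" and p=p]) (auto simp: setpc_def is_idle_def)
next
  case (inv_RF r f T q s dv) then show ?thesis
    by (intro inv_dec[where p=p]) (auto simp: setpc_def is_idle_def)
next
  case (inv_RI r T q s) then show ?thesis
    by (intro inv_dec[where p=p]) (auto simp: setpc_def is_idle_def)
next
  case (inv_WF r f T q s v) then show ?thesis
    by (intro inv_dec[where p=p]) (auto simp: setpc_def is_idle_def)
next
  case (inv_CF r f T q s fe fn) then show ?thesis
    by (intro inv_dec[where p=p]) (auto simp: setpc_def is_idle_def)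
next
  case (cn_read T iv mv) then show ?thesis
    by (intro local_dec[where p=p]) (auto simp: setpc_def is_idle_def)
next
  case (cn_seq1 T iv mv os loc) then show ?thesis
    by (intro write_dec[where p=p]) (auto simp: setpc_def setm_def is_idle_def)
next
  case (cn_imm T iv mv os loc i "is") then show ?thesis
    by (intro local_dec[where p=p]) (auto simp: setpc_def seti_def is_idle_def)
next
  case (cn_immdone T iv mv os loc) then show ?thesis
    by (intro local_dec[where p=p]) (auto simp: setpc_def is_idle_def)
next
  case (cn_mut T iv mv os loc f fs) then show ?thesis
    by (intro write_dec[where p=p]) (auto simp: setpc_def setm_def is_idle_def)
next
  case (cn_seq2 T iv mv os loc) with assms(2) show ?thesis
    by (auto simp: completes_def setpc_def setm_def is_idle_def)
next
  case (rf_imm T q s i dv) then show ?thesis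
    by (intro local_dec[where p=p]) (auto simp: setpc_def is_idle_def)
next
  case (rf_mut T q s m dv) then show ?thesis
    by (intro local_dec[where p=p]) (auto simp: setpc_def is_idle_def)
next
  case (rf_seq T q s dv v) with assms(2) show ?thesis
    by (auto simp: completes_def setpc_def is_idle_def)
next
  case (ri_imm T q s i "is" acc) then show ?thesis
    by (intro local_dec[where p=p]) (auto simp: setpc_def is_idle_def)
next
  case (ri_seq T q s acc) with assms(2) show ?thesis
    by (auto simp: completes_def setpc_def is_idle_def)
next
  case (wf_read_ret T q s f v) with assms(2) show ?thesis
    by (auto simp: completes_def setpc_def is_idle_def)
next
  case (wf_read T q s f v) then show ?thesis
    by (intro local_dec[where p=p]) (auto simp: setpc_def is_idle_def)
next
  case (wf_cas_ok T q s f v e) with assms(2) show ?thesis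
    by (auto simp: completes_def setpc_def setm_def is_idle_def)
next
  case (wf_cas_fail T q s f v e) then show ?thesis
    by (intro local_dec[where p=p]) (auto simp: setpc_def is_idle_def)
next
  case (cf_read_bot T q s f fe fn) with assms(2) show ?thesis
    by (auto simp: completes_def setpc_def is_idle_def)
next
  case (cf_read_ne T q s f fe fn) with assms(2) show ?thesis
    by (auto simp: completes_def setpc_def is_idle_def)
next
  case (cf_read T q s f fe fn) then show ?thesis
    by (intro local_dec[where p=p]) (auto simp: setpc_def is_idle_def)
next
  case (cf_cas_ok T q s f fe fn e) with assms(2) show ?thesis
    by (auto simp: completes_def setpc_def setm_def is_idle_def)
next
  case (cf_cas_fail T q s f fe fn e) then show ?thesis
    by (intro local_dec[where p=p]) (auto simp: setpc_def is_idle_def)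
qed

theorem mainTheorem2:
  fixes imf :: "'t \<Rightarrow> 'i list" and mf :: "'t \<Rightarrow> 'm list"
    and C :: "nat \<Rightarrow> ('t, 'p::finite, 'i, 'm, 'v) conf" and sched :: "nat \<Rightarrow> 'p"
  assumes "initial (C 0)"
    and "\<forall>n. step imf mf (sched n) (C n) (C (Suc n))"
  shows "\<exists>\<^sub>\<infinity>n. completes (sched n) (C n) (C (Suc n))"
proof (rule ccontr)
  assume "\<not> (\<exists>\<^sub>\<infinity>n. completes (sched n) (C n) (C (Suc n)))"
  then obtain N where N: "\<forall>n\<ge>N. \<not> completes (sched n) (C n) (C (Suc n))"
    unfolding INFM_nat_le by auto
  define g where "g i = mu mf (C (N + i))" for i
  have "\<forall>i. (g (Suc i), g i) \<in> RR"
  proof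
    fix i
    show "(g (Suc i), g i) \<in> RR"
      unfolding g_def
      using step_dec[of imf mf "sched (N+i)" "C (N+i)" "C (Suc (N+i))"] assms(2) N by simp
  qed
  moreover have "wf RR" by auto
  ultimately show False unfolding wf_iff_no_infinite_down_chain by blast
qed

end
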